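(* Let $\mathbb{F}$ be a field. The categories $\mathbf{Assoc}_1$ and $\mathbf{CAssoc}_1$ are action representable. More precisely, for every unitary associative algebra $X$ there is a natural isomorphism of functors $\mathbf{Assoc}^{\mathrm{op}}\to\mathbf{Set}$ $$\mathrm{SplExt}(-,U(X))\cong \mathrm{Hom}_{\mathbf{Assoc}}(-,U(X)),$$ and for every unitary commutative associative algebra $X$ there is a natural isomorphism of functors $\mathbf{CAssoc}^{\mathrm{op}}\to\mathbf{Set}$ $$\mathrm{SplExt}(-,U(X))\cong \mathrm{Hom}_{\mathbf{CAssoc}}(-,U(X));$$ that is, the actor of $X$ is (isomorphic to) $X$ itself.
   Context: All algebras are over a field $\mathbb{F}$. $\mathbf{Assoc}$ is the category of (not necessarily unitary) associative $\mathbb{F}$-algebras, $\mathbf{CAssoc}$ its full subcategory of commutative ones. For a variety $\mathcal{V}$ of non-associative algebras closed under adjoining an external unit, $\mathcal{V}_1$ denotes the category of algebras in $\mathcal{V}$ having a multiplicative unit, with unit-preserving algebra homomorphisms, and $U\colon\mathcal{V}_1\to\mathcal{V}$ is the forgetful functor. For objects $B,X$ of $\mathcal{V}$, a split extension of $B$ by $X$ is a diagram $X\xrightarrow{k}A\underset{\beta}{\overset{\alpha}{\rightleftarrows}}B$ in $\mathcal{V}$ with $\alpha\circ\beta=\mathrm{id}_B$ and $(X,k)$ a kernel of $\alpha$; $\mathrm{SplExt}(B,X)$ is the set of isomorphism classes of such split extensions, and $\mathrm{SplExt}(-,X)\colon\mathcal{V}^{\mathrm{op}}\to\mathbf{Set}$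 is the functor acting on morphisms $f\colon B'\to B$ by pullback along $f$. The category $\mathcal{V}_1$ is called action representable if for every object $X$ of $\mathcal{V}_1$ the functor $\mathrm{SplExt}(-,U(X))\colon\mathcal{V}^{\mathrm{op}}\to\mathbf{Set}$ is representable, i.e. naturally isomorphic to $\mathrm{Hom}_{\mathcal{V}}(-,T)$ for some object $T$ of $\mathcal{V}$ (called the actor of $X$). *)

theory Defs
  imports Main
begin

record ('k, 'a) alg =
  carrier :: "'a set"
  add :: "'a \<Rightarrow> 'a \<Rightarrow> 'a"
  zero :: "'a"
  smul :: "'k \<Rightarrow> 'a \<Rightarrow> 'a"
  mul :: "'a \<Rightarrow> 'a \<Rightarrow> 'a"

definition vec_space :: "('k::field, 'a) alg \<Rightarrow> bool" where
  "vec_space A \<longleftrightarrow>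
     zero A \<in> carrier A
   \<and> (\<forall>x\<in>carrier A. \<forall>y\<in>carrier A. add A x y \<in> carrier A)
   \<and> (\<forall>c. \<forall>x\<in>carrier A. smul A c x \<in> carrier A)
   \<and> (\<forall>x\<in>carrier A. \<forall>y\<in>carrier A. \<forall>z\<in>carrier A. add A (add A x y) z = add A x (add A y z))
   \<and> (\<forall>x\<in>carrier A. \<forall>y\<in>carrier A. add A x y = add A y x)
   \<and> (\<forall>x\<in>carrier A. add A (zero A) x = x)
   \<and> (\<forall>x\<in>carrier A. \<exists>y\<in>carrier A. add A x y = zero A)
   \<and> (\<forall>x\<in>carrier A. smul A 1 x = x)
   \<and> (\<forall>a b. \<forall>x\<in>carrier A. smul A a (smul A b x) = smul A (a * b) x)
   \<and> (\<forall>a. \<forall>x\<in>carrier A. \<forall>y\<in>carrier A. smul A a (add A x y) = add A (smul A a x) (smul A a y))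
   \<and> (\<forall>a b. \<forall>x\<in>carrier A. smul A (a + b) x = add A (smul A a x) (smul A b x))"

definition assoc_alg :: "('k::field, 'a) alg \<Rightarrow> bool" where
  "assoc_alg A \<longleftrightarrow> vec_space A
   \<and> (\<forall>x\<in>carrier A. \<forall>y\<in>carrier A. mul A x y \<in> carrier A)
   \<and> (\<forall>x\<in>carrier A. \<forall>y\<in>carrier A. \<forall>z\<in>carrier A. mul A (add A x y) z = add A (mul A x z) (mul A y z))
   \<and> (\<forall>x\<in>carrier A. \<forall>y\<in>carrier A. \<forall>z\<in>carrier A. mul A x (add A y z) = add A (mul A x y) (mul A x z))
   \<and> (\<forall>c. \<forall>x\<in>carrier A. \<forall>y\<in>carrier A. mul A (smul A c x) y = smul A c (mul A x y))
   \<and> (\<forall>c. \<forall>x\<in>carrier A. \<forall>y\<in>carrier A. mul A x (smul A c y) = smul A c (mul A x y))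
   \<and> (\<forall>x\<in>carrier A. \<forall>y\<in>carrier A. \<forall>z\<in>carrier A. mul A (mul A x y) z = mul A x (mul A y z))"

definition commutative :: "('k, 'a) alg \<Rightarrow> bool" where
  "commutative A \<longleftrightarrow> (\<forall>x\<in>carrier A. \<forall>y\<in>carrier A. mul A x y = mul A y x)"

text \<open>Membership in the variety: c = False gives Assoc, c = True gives CAssoc.\<close>
definition in_var :: "bool \<Rightarrow> ('k::field, 'a) alg \<Rightarrow> bool" where
  "in_var c A \<longleftrightarrow> assoc_alg A \<and> (c \<longrightarrow> commutative A)"

definition is_unit :: "('k, 'a) alg \<Rightarrow> 'a \<Rightarrow> bool" where
  "is_unit A u \<longleftrightarrow> u \<in> carrier A \<and> (\<forall>x\<in>carrier A. mul A u x = x \<and> mul A x u = x)"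

definition unital :: "('k, 'a) alg \<Rightarrow> bool" where
  "unital A \<longleftrightarrow> (\<exists>u. is_unit A u)"

definition one :: "('k, 'a) alg \<Rightarrow> 'a" where
  "one A = (THE u. is_unit A u)"

text \<open>Algebra homomorphisms (in the variety, i.e. not required to preserve units).\<close>
definition alg_hom :: "('k, 'a) alg \<Rightarrow> ('k, 'b) alg \<Rightarrow> ('a \<Rightarrow> 'b) \<Rightarrow> bool" where
  "alg_hom A B f \<longleftrightarrow> f ` carrier A \<subseteq> carrier B
   \<and> (\<forall>x\<in>carrier A. \<forall>y\<in>carrier A. f (add A x y) = add B (f x) (f y))
   \<and> (\<forall>c. \<forall>x\<in>carrier A. f (smul A c x) = smul B c (f x))
   \<and> (\<forall>x\<in>carrier A. \<forall>y\<in>carrier A. f (mul A x y) = mul B (f x) (f y))"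

text \<open>Split extension X --k--> A <=(alpha,beta)=> B in the variety; (X,k) is a kernel of alpha,
  i.e. k is injective with image the kernel of alpha.\<close>
definition split_ext :: "bool \<Rightarrow> ('k::field, 'b) alg \<Rightarrow> ('k, 'x) alg \<Rightarrow> ('k, 'a) alg
    \<Rightarrow> ('x \<Rightarrow> 'a) \<Rightarrow> ('a \<Rightarrow> 'b) \<Rightarrow> ('b \<Rightarrow> 'a) \<Rightarrow> bool" where
  "split_ext c B X A k \<alpha> \<beta> \<longleftrightarrow> in_var c A
   \<and> alg_hom X A k \<and> alg_hom A B \<alpha> \<and> alg_hom B A \<beta>
   \<and> (\<forall>b\<in>carrier B. \<alpha> (\<beta> b) = b)
   \<and> inj_on k (carrier X)
   \<and> k ` carrier X = {a \<in> carrier A. \<alpha> a = zero B}"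

definition split_ext_iso :: "('k, 'b) alg \<Rightarrow> ('k, 'x) alg
    \<Rightarrow> ('k, 'a) alg \<Rightarrow> ('x \<Rightarrow> 'a) \<Rightarrow> ('a \<Rightarrow> 'b) \<Rightarrow> ('b \<Rightarrow> 'a)
    \<Rightarrow> ('k, 'c) alg \<Rightarrow> ('x \<Rightarrow> 'c) \<Rightarrow> ('c \<Rightarrow> 'b) \<Rightarrow> ('b \<Rightarrow> 'c) \<Rightarrow> bool" where
  "split_ext_iso B X A k \<alpha> \<beta> A' k' \<alpha>' \<beta>' \<longleftrightarrow> (\<exists>g. alg_hom A A' g \<and> bij_betw g (carrier A) (carrier A')
     \<and> (\<forall>x\<in>carrier X. g (k x) = k' x)
     \<and> (\<forall>a\<in>carrier A. \<alpha>' (g a) = \<alpha> a)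
     \<and> (\<forall>b\<in>carrier B. g (\<beta> b) = \<beta>' b))"

text \<open>Morphism from a split extension of B' by X to a split extension of B by X lying over
  f : B' -> B and the identity of X (e.g. the canonical map from the pullback along f).\<close>
definition split_ext_mor :: "('k, 'c) alg \<Rightarrow> ('k, 'x) alg \<Rightarrow> ('c \<Rightarrow> 'b)
    \<Rightarrow> ('k, 'd) alg \<Rightarrow> ('x \<Rightarrow> 'd) \<Rightarrow> ('d \<Rightarrow> 'c) \<Rightarrow> ('c \<Rightarrow> 'd)
    \<Rightarrow> ('k, 'a) alg \<Rightarrow> ('x \<Rightarrow> 'a) \<Rightarrow> ('a \<Rightarrow> 'b) \<Rightarrow> ('b \<Rightarrow> 'a) \<Rightarrow> ('d \<Rightarrow> 'a) \<Rightarrow> bool" where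
  "split_ext_mor B' X f A' k' \<alpha>' \<beta>' A k \<alpha> \<beta> g \<longleftrightarrow> alg_hom A' A g
     \<and> (\<forall>x\<in>carrier X. g (k' x) = k x)
     \<and> (\<forall>a\<in>carrier A'. \<alpha> (g a) = f (\<alpha>' a))
     \<and> (\<forall>b\<in>carrier B'. g (\<beta>' b) = \<beta> (f b))"

text \<open>The component SplExt(B,U(X)) -> Hom(B,U(X)) of the natural isomorphism:
  b \<mapsto> k^{-1}(\<beta>(b) k(1_X)).\<close>
definition actor_map :: "('k, 'x) alg \<Rightarrow> ('k, 'a) alg \<Rightarrow> ('x \<Rightarrow> 'a) \<Rightarrow> ('b \<Rightarrow> 'a) \<Rightarrow> 'b \<Rightarrow> 'x" where
  "actor_map X A k \<beta> b = the_inv_into (carrier X) k (mul A (\<beta> b) (k (one X)))"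

end

theory Submission imports Defs begin

lemma vs_facts:
  assumes "vec_space A"
  shows vs_zero_c[simp]: "zero A \<in> carrier A"
  and vs_add_c[simp]: "\<And>x y. x \<in> carrier A \<Longrightarrow> y \<in> carrier A \<Longrightarrow> add A x y \<in> carrier A"
  and vs_smul_c[simp]: "\<And>a x. x \<in> carrier A \<Longrightarrow> smul A a x \<in> carrier A"
  and vs_assoc: "\<And>x y z. x \<in> carrier A \<Longrightarrow> y \<in> carrier A \<Longrightarrow> z \<in> carrier A \<Longrightarrow> add A (add A x y) z = add A x (add A y z)"
  and vs_comm: "\<And>x y. x \<in> carrier A \<Longrightarrow> y \<in> carrier A \<Longrightarrow> add A x y = add A y x"
  and vs_0l[simp]: "\<And>x. x \<in> carrier A \<Longrightarrow> add A (zero A) x = x"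
  and vs_1[simp]: "\<And>x. x \<in> carrier A \<Longrightarrow> smul A 1 x = x"
  and vs_smul_smul: "\<And>a b x. x \<in> carrier A \<Longrightarrow> smul A a (smul A b x) = smul A (a*b) x"
  and vs_smul_add: "\<And>a x y. x \<in> carrier A \<Longrightarrow> y \<in> carrier A \<Longrightarrow> smul A a (add A x y) = add A (smul A a x) (smul A a y)"
  and vs_add_smul: "\<And>a b x. x \<in> carrier A \<Longrightarrow> smul A (a+b) x = add A (smul A a x) (smul A b x)"
  and vs_inv: "\<And>x. x \<in> carrier A \<Longrightarrow> \<exists>y\<in>carrier A. add A x y = zero A"
  using assms unfolding vec_space_def by auto

lemma vs_0r[simp]: "vec_space A \<Longrightarrow> x \<in> carrier A \<Longrightarrow> add A x (zero A) = x"
  by (metis vs_0l vs_comm vs_zero_c)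

lemma vs_cancel:
  assumes v: "vec_space A" and c: "x \<in> carrier A" "y \<in> carrier A" "z \<in> carrier A"
    and e: "add A x z = add A y z"
  shows "x = y"
proof -
  obtain w where w: "w \<in> carrier A" "add A z w = zero A" using vs_inv[OF v c(3)] by blast
  have "x = add A (add A x z) w" using v c w by (simp add: vs_assoc)
  also have "\<dots> = add A (add A y z) w" using e by simp
  also have "\<dots> = y" using v c w by (simp add: vs_assoc)
  finally show ?thesis .
qed

lemma vs_self: "vec_space A \<Longrightarrow> z \<in> carrier A \<Longrightarrow> add A z z = z \<Longrightarrow> z = zero A"
  by (rule vs_cancel[of A z "zero A" z]) auto

lemma vs_smul0[simp]: assumes v: "vec_space A" and x: "x \<in> carrier A" shows "smul A 0 x = zero A"
proof -
  have "smul A (0+0) x = add A (smul A 0 x) (smul A 0 x)" using vs_add_smul[OF v x] .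
  then show ?thesis using vs_self[OF v] v x by simp
qed

lemma vs_smul_zero[simp]: assumes v: "vec_space A" shows "smul A a (zero A) = zero A"
proof -
  have "smul A a (add A (zero A) (zero A)) = add A (smul A a (zero A)) (smul A a (zero A))"
    using vs_smul_add[OF v] vs_zero_c[OF v] by blast
  then show ?thesis using vs_self[OF v] v by simp
qed

lemma vs_negr[simp]: assumes v: "vec_space A" and x: "x \<in> carrier A"
  shows "add A x (smul A (-1) x) = zero A"
proof -
  have "add A (smul A 1 x) (smul A (-1) x) = smul A (1 + -1) x" using vs_add_smul[OF v x] by metis
  then show ?thesis using v x by simp
qed

lemma vs_negl[simp]: assumes v: "vec_space A" and x: "x \<in> carrier A"
  shows "add A (smul A (-1) x) x = zero A"
  using vs_negr[OF v x] vs_comm[OF v] v x by simp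

lemma vs_eq_sub: assumes v: "vec_space A" and c: "x \<in> carrier A" "y \<in> carrier A"
  and e: "add A x (smul A (-1) y) = zero A" shows "x = y"
proof -
  have "add A x (smul A (-1) y) = add A y (smul A (-1) y)" using e v c by simp
  then show ?thesis using vs_cancel[OF v] v c by (metis vs_smul_c)
qed

lemma aa_vs: "assoc_alg A \<Longrightarrow> vec_space A" unfolding assoc_alg_def by blast

lemma aa_facts:
  assumes "assoc_alg A"
  shows aa_mul_c[simp]: "\<And>x y. x \<in> carrier A \<Longrightarrow> y \<in> carrier A \<Longrightarrow> mul A x y \<in> carrier A"
  and aa_distl: "\<And>x y z. x \<in> carrier A \<Longrightarrow> y \<in> carrier A \<Longrightarrow> z \<in> carrier A \<Longrightarrow> mul A (add A x y) z = add A (mul A x z) (mul A y z)"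
  and aa_distr: "\<And>x y z. x \<in> carrier A \<Longrightarrow> y \<in> carrier A \<Longrightarrow> z \<in> carrier A \<Longrightarrow> mul A x (add A y z) = add A (mul A x y) (mul A x z)"
  and aa_smull: "\<And>c x y. x \<in> carrier A \<Longrightarrow> y \<in> carrier A \<Longrightarrow> mul A (smul A c x) y = smul A c (mul A x y)"
  and aa_smulr: "\<And>c x y. x \<in> carrier A \<Longrightarrow> y \<in> carrier A \<Longrightarrow> mul A x (smul A c y) = smul A c (mul A x y)"
  and aa_assoc: "\<And>x y z. x \<in> carrier A \<Longrightarrow> y \<in> carrier A \<Longrightarrow> z \<in> carrier A \<Longrightarrow> mul A (mul A x y) z = mul A x (mul A y z)"
  using assms unfolding assoc_alg_def by auto

lemma aa_mul0r[simp]: assumes a: "assoc_alg A" and x: "x \<in> carrier A" shows "mul A x (zero A) = zero A"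
proof -
  have v: "vec_space A" using aa_vs[OF a] .
  have "mul A x (add A (zero A) (zero A)) = add A (mul A x (zero A)) (mul A x (zero A))"
    using aa_distr[OF a x vs_zero_c[OF v] vs_zero_c[OF v]] .
  then show ?thesis using vs_self[OF v] v x a by simp
qed

lemma aa_mul0l[simp]: assumes a: "assoc_alg A" and x: "x \<in> carrier A" shows "mul A (zero A) x = zero A"
proof -
  have v: "vec_space A" using aa_vs[OF a] .
  have "mul A (add A (zero A) (zero A)) x = add A (mul A (zero A) x) (mul A (zero A) x)"
    using aa_distl[OF a vs_zero_c[OF v] vs_zero_c[OF v] x] .
  then show ?thesis using vs_self[OF v] v x a by simp
qed

lemma hom_facts:
  assumes "alg_hom A B f"
  shows hom_c[simp]: "\<And>x. x \<in> carrier A \<Longrightarrow> f x \<in> carrier B"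
  and hom_add: "\<And>x y. x \<in> carrier A \<Longrightarrow> y \<in> carrier A \<Longrightarrow> f (add A x y) = add B (f x) (f y)"
  and hom_smul: "\<And>c x. x \<in> carrier A \<Longrightarrow> f (smul A c x) = smul B c (f x)"
  and hom_mul: "\<And>x y. x \<in> carrier A \<Longrightarrow> y \<in> carrier A \<Longrightarrow> f (mul A x y) = mul B (f x) (f y)"
  using assms unfolding alg_hom_def by auto

lemma hom_zero: assumes "vec_space A" "vec_space B" "alg_hom A B f" shows "f (zero A) = zero B"
proof -
  have "f (add A (zero A) (zero A)) = add B (f (zero A)) (f (zero A))" using hom_add[OF assms(3) vs_zero_c[OF assms(1)] vs_zero_c[OF assms(1)]] .
  then show ?thesis using vs_self[OF assms(2)] assms by simp
qed

lemma hom_comp: "alg_hom A B f \<Longrightarrow> alg_hom B C g \<Longrightarrow> alg_hom A C (\<lambda>x. g (f x))"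
  unfolding alg_hom_def by (auto simp: image_subset_iff)

lemma hom_inv: assumes h: "alg_hom A B f" and b: "bij_betw f (carrier A) (carrier B)" and a: "assoc_alg A"
  shows "alg_hom B A (the_inv_into (carrier A) f)"
proof -
  let ?h = "the_inv_into (carrier A) f"
  have v: "vec_space A" using aa_vs[OF a] .
  have hc: "\<And>y. y \<in> carrier B \<Longrightarrow> ?h y \<in> carrier A" using b by (meson bij_betw_apply bij_betw_the_inv_into)
  have fh: "\<And>y. y \<in> carrier B \<Longrightarrow> f (?h y) = y" using b by (simp add: f_the_inv_into_f_bij_betw)
  have hf: "\<And>x. x \<in> carrier A \<Longrightarrow> ?h (f x) = x" using b by (simp add: bij_betw_def the_inv_into_f_f)
  show ?thesis unfolding alg_hom_def
  proof (intro conjI ballI allI)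
    show "?h ` carrier B \<subseteq> carrier A" using hc by blast
  next
    fix x y assume xy: "x \<in> carrier B" "y \<in> carrier B"
    have "add B x y = f (add A (?h x) (?h y))" using hom_add[OF h] hc fh xy by simp
    then show "?h (add B x y) = add A (?h x) (?h y)" using hf hc xy v by simp
  next
    fix x y assume xy: "x \<in> carrier B" "y \<in> carrier B"
    have "mul B x y = f (mul A (?h x) (?h y))" using hom_mul[OF h] hc fh xy by simp
    then show "?h (mul B x y) = mul A (?h x) (?h y)" using hf hc xy a by simp
  next
    fix c x assume x: "x \<in> carrier B"
    have "smul B c x = f (smul A c (?h x))" using hom_smul[OF h] hc fh x by simp
    then show "?h (smul B c x) = smul A c (?h x)" using hf hc x v by simp
  qed
qed

lemma unit_unique: "is_unit A u \<Longrightarrow> is_unit A v \<Longrightarrow> u = v"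
  unfolding is_unit_def by metis

lemma one_unit: "unital A \<Longrightarrow> is_unit A (one A)"
  unfolding unital_def one_def using unit_unique theI by metis


definition psi :: "('k, 'x) alg \<Rightarrow> ('k, 'a) alg \<Rightarrow> ('x \<Rightarrow> 'a) \<Rightarrow> 'a \<Rightarrow> 'x" where
  "psi X A k a = the_inv_into (carrier X) k (mul A a (k (one X)))"

lemma actor_psi: "actor_map X A k \<beta> b = psi X A k (\<beta> b)"
  unfolding actor_map_def psi_def ..

definition prod_alg :: "('k, 'x) alg \<Rightarrow> ('k, 'b) alg \<Rightarrow> ('k, 'x \<times> 'b) alg" where
  "prod_alg X B = \<lparr>carrier = carrier X \<times> carrier B,
     add = (\<lambda>p q. (add X (fst p) (fst q), add B (snd p) (snd q))),
     zero = (zero X, zero B),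
     smul = (\<lambda>a p. (smul X a (fst p), smul B a (snd p))),
     mul = (\<lambda>p q. (mul X (fst p) (fst q), mul B (snd p) (snd q)))\<rparr>"

lemma prod_simps[simp]:
  "carrier (prod_alg X B) = carrier X \<times> carrier B"
  "add (prod_alg X B) p q = (add X (fst p) (fst q), add B (snd p) (snd q))"
  "zero (prod_alg X B) = (zero X, zero B)"
  "smul (prod_alg X B) a p = (smul X a (fst p), smul B a (snd p))"
  "mul (prod_alg X B) p q = (mul X (fst p) (fst q), mul B (snd p) (snd q))"
  unfolding prod_alg_def by simp_all

lemma prod_vs: assumes "vec_space X" "vec_space B" shows "vec_space (prod_alg X B)"
proof -
  have inv: "\<exists>y\<in>carrier (prod_alg X B). add (prod_alg X B) p y = zero (prod_alg X B)"
    if "p \<in> carrier (prod_alg X B)" for p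
  proof -
    have pc: "fst p \<in> carrier X" "snd p \<in> carrier B" using that by (auto simp: mem_Times_iff)
    obtain y1 where "y1 \<in> carrier X" "add X (fst p) y1 = zero X" using vs_inv[OF assms(1) pc(1)] by auto
    moreover obtain y2 where "y2 \<in> carrier B" "add B (snd p) y2 = zero B" using vs_inv[OF assms(2) pc(2)] by auto
    ultimately show ?thesis by (intro bexI[of _ "(y1,y2)"]) auto
  qed
  show ?thesis unfolding vec_space_def
    using assms inv by (auto simp: vs_assoc vs_smul_smul vs_smul_add vs_add_smul intro: vs_comm)
qed

lemma prod_aa: assumes "assoc_alg X" "assoc_alg B" shows "assoc_alg (prod_alg X B)"
  using assms prod_vs[OF aa_vs aa_vs] unfolding assoc_alg_def[of "prod_alg X B"]
  by (auto simp: aa_distl aa_distr aa_smull aa_smulr aa_assoc)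

lemma prod_var: assumes "in_var c X" "in_var c B" shows "in_var c (prod_alg X B)"
  using assms prod_aa unfolding in_var_def commutative_def by auto

locale sext =
  fixes c :: bool and B :: "('k::field, 'b) alg" and X :: "('k, 'x) alg" and A :: "('k, 'a) alg"
    and k :: "'x \<Rightarrow> 'a" and \<alpha> :: "'a \<Rightarrow> 'b" and \<beta> :: "'b \<Rightarrow> 'a"
  assumes se: "split_ext c B X A k \<alpha> \<beta>" and vB: "in_var c B" and vX: "in_var c X" and uX: "unital X"
begin

lemma aaA: "assoc_alg A" and aaB: "assoc_alg B" and aaX: "assoc_alg X"
  using se vB vX unfolding split_ext_def in_var_def by auto

lemma vA: "vec_space A" and vB': "vec_space B" and vX': "vec_space X"
  using aaA aaB aaX aa_vs by auto

lemma hk: "alg_hom X A k" and ha: "alg_hom A B \<alpha>" and hb: "alg_hom B A \<beta>"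
  and ab: "\<And>b. b \<in> carrier B \<Longrightarrow> \<alpha> (\<beta> b) = b"
  and ik: "inj_on k (carrier X)" and imk: "k ` carrier X = {a \<in> carrier A. \<alpha> a = zero B}"
  using se unfolding split_ext_def by auto

abbreviation "e \<equiv> one X"

lemma e_c[simp]: "e \<in> carrier X" and e_l[simp]: "\<And>x. x \<in> carrier X \<Longrightarrow> mul X e x = x"
  and e_r[simp]: "\<And>x. x \<in> carrier X \<Longrightarrow> mul X x e = x"
  using one_unit[OF uX] unfolding is_unit_def by auto

lemmas [simp] = vA vB' vX' aaA aaB aaX

lemma k_c[simp]: "x \<in> carrier X \<Longrightarrow> k x \<in> carrier A" using hom_c[OF hk] .
lemma a_c[simp]: "a \<in> carrier A \<Longrightarrow> \<alpha> a \<in> carrier B" using hom_c[OF ha] .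
lemma b_c[simp]: "b \<in> carrier B \<Longrightarrow> \<beta> b \<in> carrier A" using hom_c[OF hb] .
lemma ak[simp]: "x \<in> carrier X \<Longrightarrow> \<alpha> (k x) = zero B" using imk by auto
lemma ker: "a \<in> carrier A \<Longrightarrow> \<alpha> a = zero B \<Longrightarrow> \<exists>x\<in>carrier X. a = k x" using imk by auto
lemma kinv[simp]: "x \<in> carrier X \<Longrightarrow> the_inv_into (carrier X) k (k x) = x"
  using ik by (simp add: the_inv_into_f_f)
lemma kinj: "x \<in> carrier X \<Longrightarrow> y \<in> carrier X \<Longrightarrow> k x = k y \<Longrightarrow> x = y"
  using ik by (simp add: inj_on_def)
lemma k0[simp]: "k (zero X) = zero A" using hom_zero[OF vX' vA hk] .
lemma a0[simp]: "\<alpha> (zero A) = zero B" using hom_zero[OF vA vB' ha] .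

lemma k_add: "x \<in> carrier X \<Longrightarrow> y \<in> carrier X \<Longrightarrow> k (add X x y) = add A (k x) (k y)" using hom_add[OF hk] .
lemma k_mul: "x \<in> carrier X \<Longrightarrow> y \<in> carrier X \<Longrightarrow> k (mul X x y) = mul A (k x) (k y)" using hom_mul[OF hk] .
lemma k_smul: "x \<in> carrier X \<Longrightarrow> k (smul X c' x) = smul A c' (k x)" using hom_smul[OF hk] .

lemma ke_r[simp]: "x \<in> carrier X \<Longrightarrow> mul A (k x) (k e) = k x"
  using k_mul[of x e] by simp
lemma ke_l[simp]: "x \<in> carrier X \<Longrightarrow> mul A (k e) (k x) = k x"
  using k_mul[of e x] by simp

lemma ideal_r: assumes a: "a \<in> carrier A" shows "\<exists>y\<in>carrier X. mul A a (k e) = k y"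
proof -
  have "\<alpha> (mul A a (k e)) = zero B" using hom_mul[OF ha a k_c[OF e_c]] a by simp
  then show ?thesis using ker a by simp
qed

lemma ideal_l: assumes a: "a \<in> carrier A" shows "\<exists>y\<in>carrier X. mul A (k e) a = k y"
proof -
  have "\<alpha> (mul A (k e) a) = zero B" using hom_mul[OF ha k_c[OF e_c] a] a by simp
  then show ?thesis using ker a by simp
qed

lemma central: assumes a: "a \<in> carrier A" shows "mul A a (k e) = mul A (k e) a"
proof -
  obtain y where y: "y \<in> carrier X" "mul A a (k e) = k y" using ideal_r[OF a] by blast
  obtain z where z: "z \<in> carrier X" "mul A (k e) a = k z" using ideal_l[OF a] by blast
  have "k y = mul A (k e) (mul A a (k e))" using y by simp
  also have "\<dots> = mul A (mul A (k e) a) (k e)" using aa_assoc[OF aaA] a by simp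
  also have "\<dots> = k z" using z by simp
  finally show ?thesis using y z by simp
qed

lemma psi_c: assumes a: "a \<in> carrier A" shows "psi X A k a \<in> carrier X" "k (psi X A k a) = mul A a (k e)"
  using ideal_r[OF a] unfolding psi_def by auto

lemma psi_c'[simp]: "a \<in> carrier A \<Longrightarrow> psi X A k a \<in> carrier X" using psi_c by blast

lemma psi_unique: "a \<in> carrier A \<Longrightarrow> x \<in> carrier X \<Longrightarrow> mul A a (k e) = k x \<Longrightarrow> psi X A k a = x"
  unfolding psi_def by simp

lemma psi_hom: "alg_hom A X (psi X A k)"
  unfolding alg_hom_def
proof (intro conjI ballI allI)
  show "psi X A k ` carrier A \<subseteq> carrier X" by auto
next
  fix a a' assume h: "a \<in> carrier A" "a' \<in> carrier A"
  show "psi X A k (add A a a') = add X (psi X A k a) (psi X A k a')"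
    by (rule psi_unique) (use h in \<open>simp_all add: k_add psi_c aa_distl\<close>)
next
  fix c' a assume h: "a \<in> carrier A"
  show "psi X A k (smul A c' a) = smul X c' (psi X A k a)"
    by (rule psi_unique) (use h in \<open>simp_all add: k_smul psi_c aa_smull\<close>)
next
  fix a a' assume h: "a \<in> carrier A" "a' \<in> carrier A"
  have "k (mul X (psi X A k a) (psi X A k a')) = mul A (mul A a (k e)) (mul A a' (k e))"
    using h by (simp add: k_mul psi_c)
  also have "\<dots> = mul A a (mul A (mul A (k e) a') (k e))" using h by (simp add: aa_assoc)
  also have "\<dots> = mul A a (mul A a' (k e))" using h by (simp add: aa_assoc central[symmetric])
  also have "\<dots> = mul A (mul A a a') (k e)" using h by (simp add: aa_assoc)
  finally show "psi X A k (mul A a a') = mul X (psi X A k a) (psi X A k a')"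
    by (intro psi_unique) (use h in simp_all)
qed

lemma psi_k[simp]: "x \<in> carrier X \<Longrightarrow> psi X A k (k x) = x"
  by (rule psi_unique) simp_all

lemma phi_hom: "alg_hom B X (actor_map X A k \<beta>)"
  unfolding actor_psi using hom_comp[OF hb psi_hom] .

definition Psi :: "'a \<Rightarrow> 'x \<times> 'b" where "Psi a = (psi X A k a, \<alpha> a)"

lemma Psi_hom: "alg_hom A (prod_alg X B) Psi"
  using psi_hom ha unfolding alg_hom_def Psi_def by auto

lemma Psi_k: "x \<in> carrier X \<Longrightarrow> Psi (k x) = (x, zero B)" unfolding Psi_def by simp
lemma Psi_b: "b \<in> carrier B \<Longrightarrow> Psi (\<beta> b) = (actor_map X A k \<beta> b, b)"
  unfolding Psi_def actor_psi by (simp add: ab)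

lemma Psi_bij: "bij_betw Psi (carrier A) (carrier X \<times> carrier B)"
  unfolding bij_betw_def
proof
  show "inj_on Psi (carrier A)"
  proof (rule inj_onI)
    fix a a' assume h: "a \<in> carrier A" "a' \<in> carrier A" "Psi a = Psi a'"
    define d where "d = add A a (smul A (-1) a')"
    have dc: "d \<in> carrier A" unfolding d_def using h by simp
    have "\<alpha> d = add B (\<alpha> a) (smul B (-1) (\<alpha> a'))" unfolding d_def using h hom_add[OF ha] hom_smul[OF ha] by simp
    then have ad: "\<alpha> d = zero B" using h by (simp add: Psi_def)
    have "psi X A k d = add X (psi X A k a) (smul X (-1) (psi X A k a'))"
      unfolding d_def using h hom_add[OF psi_hom] hom_smul[OF psi_hom] by simp
    then have pd: "psi X A k d = zero X" using h by (simp add: Psi_def)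
    obtain x where x: "x \<in> carrier X" "d = k x" using ker[OF dc ad] by blast
    have "d = zero A" using pd x by simp
    then show "a = a'" using vs_eq_sub[OF vA] h unfolding d_def by simp
  qed
next
  show "Psi ` carrier A = carrier X \<times> carrier B"
  proof
    show "Psi ` carrier A \<subseteq> carrier X \<times> carrier B" using Psi_def by auto
  next
    show "carrier X \<times> carrier B \<subseteq> Psi ` carrier A"
    proof (clarify)
      fix y b assume yb: "y \<in> carrier X" "b \<in> carrier B"
      let ?p = "actor_map X A k \<beta> b"
      have pc: "?p \<in> carrier X" using hom_c[OF phi_hom] yb by simp
      define w where "w = add X y (smul X (-1) ?p)"
      have wc: "w \<in> carrier X" unfolding w_def using yb pc by simp
      define a where "a = add A (\<beta> b) (k w)"
      have ac: "a \<in> carrier A" unfolding a_def using yb wc by simp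
      have aa: "\<alpha> a = b" unfolding a_def using hom_add[OF ha] yb wc ab by simp
      have "add X ?p w = y" unfolding w_def using yb pc
        by (metis vX' vs_0r vs_assoc vs_comm vs_negr vs_smul_c)
      moreover have "mul A a (k e) = add A (mul A (\<beta> b) (k e)) (k w)" unfolding a_def using yb wc
        by (simp add: aa_distl)
      moreover have "mul A (\<beta> b) (k e) = k ?p" unfolding actor_psi using psi_c(2) yb by simp
      ultimately have "mul A a (k e) = k y" using yb wc pc by (simp add: k_add[symmetric])
      then have "psi X A k a = y" using psi_unique ac yb by simp
      then show "(y, b) \<in> Psi ` carrier A" using ac aa unfolding Psi_def by force
    qed
  qed
qed

end


theorem theorem3p1:
  fixes X :: "('k::field, 'x) alg" and c :: bool
  assumes "in_var c X" and "unital X"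
  shows
   "(\<forall>(B::('k,'b) alg) (A::('k,'a) alg) k \<alpha> \<beta>.
        in_var c B \<and> split_ext c B X A k \<alpha> \<beta> \<longrightarrow> alg_hom B X (actor_map X A k \<beta>))
  \<and> (\<forall>(B::('k,'b) alg) (A1::('k,'a) alg) k1 \<alpha>1 \<beta>1 (A2::('k,'a2) alg) k2 \<alpha>2 \<beta>2.
        in_var c B \<and> split_ext c B X A1 k1 \<alpha>1 \<beta>1 \<and> split_ext c B X A2 k2 \<alpha>2 \<beta>2 \<longrightarrow>
        ((\<forall>b\<in>carrier B. actor_map X A1 k1 \<beta>1 b = actor_map X A2 k2 \<beta>2 b)
          \<longleftrightarrow> split_ext_iso B X A1 k1 \<alpha>1 \<beta>1 A2 k2 \<alpha>2 \<beta>2))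
  \<and> (\<forall>(B::('k,'b) alg) \<phi>. in_var c B \<and> alg_hom B X \<phi> \<longrightarrow>
        (\<exists>(A::('k,'x \<times> 'b) alg) k \<alpha> \<beta>. split_ext c B X A k \<alpha> \<beta>
            \<and> (\<forall>b\<in>carrier B. actor_map X A k \<beta> b = \<phi> b)))
  \<and> (\<forall>(B::('k,'b) alg) (B'::('k,'b2) alg) f (A::('k,'a) alg) k \<alpha> \<beta> (A'::('k,'a2) alg) k' \<alpha>' \<beta>' g.
        in_var c B \<and> in_var c B' \<and> alg_hom B' B f
        \<and> split_ext c B X A k \<alpha> \<beta> \<and> split_ext c B' X A' k' \<alpha>' \<beta>'
        \<and> split_ext_mor B' X f A' k' \<alpha>' \<beta>' A k \<alpha> \<beta> g \<longrightarrow>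
        (\<forall>b\<in>carrier B'. actor_map X A' k' \<beta>' b = actor_map X A k \<beta> (f b)))"
proof (intro conjI allI impI)
  fix B :: "('k,'b) alg" and A :: "('k,'a) alg" and k \<alpha> \<beta>
  assume h: "in_var c B \<and> split_ext c B X A k \<alpha> \<beta>"
  interpret S: sext c B X A k \<alpha> \<beta> using h assms by unfold_locales auto
  show "alg_hom B X (actor_map X A k \<beta>)" by (rule S.phi_hom)
next
  fix B :: "('k,'b) alg" and A1 :: "('k,'a) alg" and k1 \<alpha>1 \<beta>1 and A2 :: "('k,'a2) alg" and k2 \<alpha>2 \<beta>2
  assume h: "in_var c B \<and> split_ext c B X A1 k1 \<alpha>1 \<beta>1 \<and> split_ext c B X A2 k2 \<alpha>2 \<beta>2"
  interpret S1: sext c B X A1 k1 \<alpha>1 \<beta>1 using h assms by unfold_locales auto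
  interpret S2: sext c B X A2 k2 \<alpha>2 \<beta>2 using h assms by unfold_locales auto
  show "(\<forall>b\<in>carrier B. actor_map X A1 k1 \<beta>1 b = actor_map X A2 k2 \<beta>2 b)
          \<longleftrightarrow> split_ext_iso B X A1 k1 \<alpha>1 \<beta>1 A2 k2 \<alpha>2 \<beta>2"
  proof
    assume eq: "\<forall>b\<in>carrier B. actor_map X A1 k1 \<beta>1 b = actor_map X A2 k2 \<beta>2 b"
    let ?i = "the_inv_into (carrier A2) S2.Psi"
    define g where "g = (\<lambda>a. ?i (S1.Psi a))"
    have ih: "alg_hom (prod_alg X B) A2 ?i"
      using hom_inv[OF S2.Psi_hom _ S2.aaA] S2.Psi_bij by simp
    have gh: "alg_hom A1 A2 g" unfolding g_def using hom_comp[OF S1.Psi_hom ih] .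
    have gb: "bij_betw g (carrier A1) (carrier A2)"
      unfolding g_def using bij_betw_trans[OF S1.Psi_bij bij_betw_the_inv_into[OF S2.Psi_bij]]
      by (simp add: comp_def)
    have i2: "\<And>a. a \<in> carrier A2 \<Longrightarrow> ?i (S2.Psi a) = a"
      using S2.Psi_bij by (simp add: bij_betw_def the_inv_into_f_f)
    have i2': "\<And>p. p \<in> carrier X \<times> carrier B \<Longrightarrow> S2.Psi (?i p) = p"
      using S2.Psi_bij by (simp add: f_the_inv_into_f_bij_betw)
    show "split_ext_iso B X A1 k1 \<alpha>1 \<beta>1 A2 k2 \<alpha>2 \<beta>2"
      unfolding split_ext_iso_def
    proof (intro exI[of _ g] conjI gh gb ballI)
      fix x assume x: "x \<in> carrier X"
      show "g (k1 x) = k2 x" unfolding g_def using S1.Psi_k[OF x] S2.Psi_k[OF x] i2[of "k2 x"] x by simp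
    next
      fix a assume a: "a \<in> carrier A1"
      have "S1.Psi a \<in> carrier X \<times> carrier B" using a S1.Psi_bij by (meson bij_betw_apply)
      then have "S2.Psi (g a) = S1.Psi a" unfolding g_def using i2' by simp
      then show "\<alpha>2 (g a) = \<alpha>1 a" unfolding S1.Psi_def S2.Psi_def by simp
    next
      fix b assume b: "b \<in> carrier B"
      show "g (\<beta>1 b) = \<beta>2 b" unfolding g_def using S1.Psi_b[OF b] S2.Psi_b[OF b] eq b i2[of "\<beta>2 b"] by simp
    qed
  next
    assume "split_ext_iso B X A1 k1 \<alpha>1 \<beta>1 A2 k2 \<alpha>2 \<beta>2"
    then obtain g where gh: "alg_hom A1 A2 g" and gk: "\<forall>x\<in>carrier X. g (k1 x) = k2 x"
      and gb: "\<forall>b\<in>carrier B. g (\<beta>1 b) = \<beta>2 b"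
      unfolding split_ext_iso_def by blast
    show "\<forall>b\<in>carrier B. actor_map X A1 k1 \<beta>1 b = actor_map X A2 k2 \<beta>2 b"
    proof
      fix b assume b: "b \<in> carrier B"
      let ?p1 = "actor_map X A1 k1 \<beta>1 b" and ?p2 = "actor_map X A2 k2 \<beta>2 b"
      have p1: "?p1 \<in> carrier X" using hom_c[OF S1.phi_hom] b by simp
      have p2: "?p2 \<in> carrier X" using hom_c[OF S2.phi_hom] b by simp
      have "k2 ?p1 = g (k1 ?p1)" using gk p1 by simp
      also have "\<dots> = g (mul A1 (\<beta>1 b) (k1 S1.e))" using S1.psi_c(2)[of "\<beta>1 b"] b by (simp add: actor_psi)
      also have "\<dots> = mul A2 (\<beta>2 b) (k2 S1.e)" using hom_mul[OF gh] b gk gb by simp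
      also have "\<dots> = k2 ?p2" using S2.psi_c(2)[of "\<beta>2 b"] b by (simp add: actor_psi)
      finally show "?p1 = ?p2" using S2.kinj p1 p2 by blast
    qed
  qed
next
  fix B :: "('k,'b) alg" and \<phi>
  assume h: "in_var c B \<and> alg_hom B X \<phi>"
  have aX: "assoc_alg X" and aB: "assoc_alg B" using h assms unfolding in_var_def by auto
  have vX: "vec_space X" and vB: "vec_space B" using aX aB aa_vs by auto
  have e: "is_unit X (one X)" using one_unit[OF assms(2)] .
  let ?A = "prod_alg X B" and ?k = "\<lambda>x. (x, zero B)" and ?\<beta> = "\<lambda>b. (\<phi> b, b)"
  have se: "split_ext c B X ?A ?k snd ?\<beta>"
    unfolding split_ext_def
  proof (intro conjI)
    show "in_var c ?A" using prod_var assms(1) h by blast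
    show "alg_hom X ?A ?k" unfolding alg_hom_def using vB aB by auto
    show "alg_hom ?A B snd" unfolding alg_hom_def by auto
    show "alg_hom B ?A ?\<beta>" using h unfolding alg_hom_def by auto
    show "\<forall>b\<in>carrier B. snd (?\<beta> b) = b" by simp
    show "inj_on ?k (carrier X)" by (simp add: inj_on_def)
    show "?k ` carrier X = {a \<in> carrier ?A. snd a = zero B}" using vB by auto
  qed
  have "\<forall>b\<in>carrier B. actor_map X ?A ?k ?\<beta> b = \<phi> b"
  proof
    fix b assume b: "b \<in> carrier B"
    have pc: "\<phi> b \<in> carrier X" using hom_c[OF conjunct2[OF h] b] .
    have m: "mul ?A (?\<beta> b) (?k (one X)) = ?k (\<phi> b)" using e pc b aB unfolding is_unit_def by simp
    have i: "inj_on ?k (carrier X)" by (simp add: inj_on_def)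
    show "actor_map X ?A ?k ?\<beta> b = \<phi> b" unfolding actor_map_def m
      using the_inv_into_f_f[OF i pc] .
  qed
  then show "\<exists>(A::('k,'x \<times> 'b) alg) k \<alpha> \<beta>. split_ext c B X A k \<alpha> \<beta>
            \<and> (\<forall>b\<in>carrier B. actor_map X A k \<beta> b = \<phi> b)" using se by blast
next
  fix B :: "('k,'b) alg" and B' :: "('k,'b2) alg" and f and A :: "('k,'a) alg" and k \<alpha> \<beta>
    and A' :: "('k,'a2) alg" and k' \<alpha>' \<beta>' g
  assume h: "in_var c B \<and> in_var c B' \<and> alg_hom B' B f
        \<and> split_ext c B X A k \<alpha> \<beta> \<and> split_ext c B' X A' k' \<alpha>' \<beta>'
        \<and> split_ext_mor B' X f A' k' \<alpha>' \<beta>' A k \<alpha> \<beta> g"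
  interpret S: sext c B X A k \<alpha> \<beta> using h assms by unfold_locales auto
  interpret S': sext c B' X A' k' \<alpha>' \<beta>' using h assms by unfold_locales auto
  have fh: "alg_hom B' B f" using h by blast
  have gh: "alg_hom A' A g" and gk: "\<forall>x\<in>carrier X. g (k' x) = k x"
      and gb: "\<forall>b\<in>carrier B'. g (\<beta>' b) = \<beta> (f b)"
    using h unfolding split_ext_mor_def by blast+
  show "\<forall>b\<in>carrier B'. actor_map X A' k' \<beta>' b = actor_map X A k \<beta> (f b)"
  proof
    fix b assume b: "b \<in> carrier B'"
    have fb: "f b \<in> carrier B" using hom_c[OF fh b] .
    let ?p1 = "actor_map X A' k' \<beta>' b" and ?p2 = "actor_map X A k \<beta> (f b)"
    have p1: "?p1 \<in> carrier X" using hom_c[OF S'.phi_hom] b by simp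
    have p2: "?p2 \<in> carrier X" using hom_c[OF S.phi_hom] fb by simp
    have "k ?p1 = g (k' ?p1)" using gk p1 by simp
    also have "\<dots> = g (mul A' (\<beta>' b) (k' S.e))" using S'.psi_c(2)[of "\<beta>' b"] b by (simp add: actor_psi)
    also have "\<dots> = mul A (\<beta> (f b)) (k S.e)" using hom_mul[OF gh] b gk gb by simp
    also have "\<dots> = k ?p2" using S.psi_c(2)[of "\<beta> (f b)"] fb by (simp add: actor_psi)
    finally show "?p1 = ?p2" using S.kinj p1 p2 by blast
  qed
qed

end
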